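(* Every distinguished variety in $\mathbb G_n$ is polynomially convex.
   Context: $\mathbb G_n=\pi_n(\mathbb D^n)$, $\Gamma_n=\pi_n(\overline{\mathbb D}^n)$, $b\Gamma_n=\pi_n(\mathbb T^n)$, where $\pi_n(z)=(e_1(z),\dots,e_{n-1}(z),z_1\cdots z_n)$ with $e_k$ the elementary symmetric polynomials. A distinguished variety in $\mathbb G_n$ is a set $\Lambda=V\cap\mathbb G_n$, $V$ the common zero set of some set of polynomials, such that $\overline{\Lambda}\cap\partial\Gamma_n=\overline{\Lambda}\cap b\Gamma_n$. *)

theory Defs
  imports "HOL-Analysis.Analysis"
begin

text \<open>Points of C^n are represented as functions nat => complex vanishing at indices >= n
  (coordinates z 0, ..., z (n-1)). The product topology on nat => complex restricted to this
  set is the Euclidean topology of C^n.\<close>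

definition Cn :: "nat \<Rightarrow> (nat \<Rightarrow> complex) set" where
  "Cn n = {z. \<forall>i\<ge>n. z i = 0}"

inductive_set poly_fun :: "nat \<Rightarrow> ((nat \<Rightarrow> complex) \<Rightarrow> complex) set" for n :: nat where
  const: "(\<lambda>z. c) \<in> poly_fun n"
| coord: "i < n \<Longrightarrow> (\<lambda>z. z i) \<in> poly_fun n"
| add: "p \<in> poly_fun n \<Longrightarrow> q \<in> poly_fun n \<Longrightarrow> (\<lambda>z. p z + q z) \<in> poly_fun n"
| mult: "p \<in> poly_fun n \<Longrightarrow> q \<in> poly_fun n \<Longrightarrow> (\<lambda>z. p z * q z) \<in> poly_fun n"

definition elem_sym :: "nat \<Rightarrow> nat \<Rightarrow> (nat \<Rightarrow> complex) \<Rightarrow> complex" where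
  "elem_sym n k z = (\<Sum>S\<in>{S. S \<subseteq> {..<n} \<and> card S = k}. \<Prod>i\<in>S. z i)"

definition sym_map :: "nat \<Rightarrow> (nat \<Rightarrow> complex) \<Rightarrow> (nat \<Rightarrow> complex)" where
  "sym_map n z = (\<lambda>k. if k + 1 < n then elem_sym n (k + 1) z
                       else if k + 1 = n then (\<Prod>i<n. z i) else 0)"

definition polydisc :: "nat \<Rightarrow> (nat \<Rightarrow> complex) set" where
  "polydisc n = {z \<in> Cn n. \<forall>i<n. norm (z i) < 1}"

definition closed_polydisc :: "nat \<Rightarrow> (nat \<Rightarrow> complex) set" where
  "closed_polydisc n = {z \<in> Cn n. \<forall>i<n. norm (z i) \<le> 1}"

definition torus :: "nat \<Rightarrow> (nat \<Rightarrow> complex) set" where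
  "torus n = {z \<in> Cn n. \<forall>i<n. norm (z i) = 1}"

definition symG :: "nat \<Rightarrow> (nat \<Rightarrow> complex) set" where
  "symG n = sym_map n ` polydisc n"

definition symGamma :: "nat \<Rightarrow> (nat \<Rightarrow> complex) set" where
  "symGamma n = sym_map n ` closed_polydisc n"

definition symbGamma :: "nat \<Rightarrow> (nat \<Rightarrow> complex) set" where
  "symbGamma n = sym_map n ` torus n"

definition topbdGamma :: "nat \<Rightarrow> (nat \<Rightarrow> complex) set" where
  "topbdGamma n = (subtopology euclidean (Cn n)) frontier_of (symGamma n)"

definition zero_set :: "nat \<Rightarrow> ((nat \<Rightarrow> complex) \<Rightarrow> complex) set \<Rightarrow> (nat \<Rightarrow> complex) set" where
  "zero_set n P = {z \<in> Cn n. \<forall>p\<in>P. p z = 0}"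

definition distinguished_variety :: "nat \<Rightarrow> (nat \<Rightarrow> complex) set \<Rightarrow> bool" where
  "distinguished_variety n \<Lambda> \<longleftrightarrow>
     (\<exists>P. P \<subseteq> poly_fun n \<and> \<Lambda> = zero_set n P \<inter> symG n) \<and>
     closure \<Lambda> \<inter> topbdGamma n = closure \<Lambda> \<inter> symbGamma n"

definition poly_hull :: "nat \<Rightarrow> (nat \<Rightarrow> complex) set \<Rightarrow> (nat \<Rightarrow> complex) set" where
  "poly_hull n K = {z \<in> Cn n. \<forall>p\<in>poly_fun n. \<forall>B::real.
      (\<forall>w\<in>K. norm (p w) \<le> B) \<longrightarrow> norm (p z) \<le> B}"

definition poly_convex :: "nat \<Rightarrow> (nat \<Rightarrow> complex) set \<Rightarrow> bool" where
  "poly_convex n X \<longleftrightarrow> X \<subseteq> Cn n \<and> (\<forall>K. compact K \<and> K \<subseteq> X \<longrightarrow> poly_hull n K \<subseteq> X)"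

end

theory Submission imports Defs "HOL-Computational_Algebra.Fundamental_Theorem_Algebra" begin

lemma poly_fun_sum:
  assumes "finite A" "\<And>a. a \<in> A \<Longrightarrow> (\<lambda>z. f a z) \<in> poly_fun n"
  shows "(\<lambda>z. \<Sum>a\<in>A. f a z) \<in> poly_fun n"
  using assms
proof (induction A rule: finite_induct)
  case empty
  then show ?case using poly_fun.const[of 0 n] by simp
next
  case (insert x F)
  then show ?case by (simp add: poly_fun.add)
qed

lemma poly_fun_prod_mset:
  assumes "\<And>a. a \<in># M \<Longrightarrow> (\<lambda>z. f a z) \<in> poly_fun n"
  shows "(\<lambda>z. \<Prod>a\<in>#M. f a z) \<in> poly_fun n"
  using assms
proof (induction M)
  case empty
  then show ?case using poly_fun.const[of 1 n] by simp
next
  case (add x M)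
  then show ?case by (simp add: poly_fun.mult)
qed

definition cf :: "(nat \<Rightarrow> complex) \<Rightarrow> nat \<Rightarrow> complex" where
  "cf z k = (if k = 0 then 1 else z (k - 1))"

definition pz :: "nat \<Rightarrow> (nat \<Rightarrow> complex) \<Rightarrow> complex poly" where
  "pz n z = (\<Sum>k\<le>n. monom ((-1)^k * cf z k) (n - k))"

lemma poly_pz: "poly (pz n z) t = (\<Sum>k\<le>n. (-1)^k * cf z k * t^(n-k))"
  by (simp add: pz_def poly_sum poly_monom)

lemma poly_pz_fun: "(\<lambda>z. poly (pz n z) t) \<in> poly_fun n"
  unfolding poly_pz
proof (rule poly_fun_sum)
  fix k assume k: "k \<in> {..n}"
  show "(\<lambda>z. (-1)^k * cf z k * t^(n-k)) \<in> poly_fun n"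
  proof (cases "k = 0")
    case True then show ?thesis using poly_fun.const by (simp add: cf_def)
  next
    case False
    then have "k - 1 < n" using k by auto
    then have "(\<lambda>z. z (k-1)) \<in> poly_fun n" by (rule poly_fun.coord)
    then have "(\<lambda>z. ((-1)^k) * z (k-1)) \<in> poly_fun n" using poly_fun.mult poly_fun.const by blast
    then have "(\<lambda>z. ((-1)^k) * z (k-1) * t^(n-k)) \<in> poly_fun n" using poly_fun.mult poly_fun.const by blast
    then show ?thesis using False by (simp add: cf_def)
  qed
qed simp

lemma coeff_pz: "coeff (pz n z) i = (if i \<le> n then (-1)^(n-i) * cf z (n-i) else 0)"
proof -
  have "coeff (pz n z) i = (\<Sum>k\<le>n. if n - k = i then (-1)^k * cf z k else 0)"
    by (simp add: pz_def coeff_sum coeff_monom)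
  also have "\<dots> = (if i \<le> n then (-1)^(n-i) * cf z (n-i) else 0)"
  proof (cases "i \<le> n")
    case True
    have "(\<Sum>k\<le>n. if n - k = i then (-1)^k * cf z k else 0) = (\<Sum>k\<le>n. if k = n - i then (-1)^k * cf z k else 0)"
      by (rule sum.cong) (use True in auto)
    also have "\<dots> = (-1)^(n-i) * cf z (n-i)" by (subst sum.delta) auto
    finally show ?thesis using True by simp
  next
    case False
    then show ?thesis by (auto intro!: sum.neutral)
  qed
  finally show ?thesis .
qed


lemma elem_sym_0: "elem_sym n 0 l = 1"
proof -
  have "{S. S \<subseteq> {..<n} \<and> card S = 0} = {{}}"
    using finite_subset[of _ "{..<n}"] by (auto simp: card_eq_0_iff)
  then show ?thesis by (simp add: elem_sym_def)
qed

lemma elem_sym_n: "elem_sym n n l = (\<Prod>i<n. l i)"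
proof -
  have "{S. S \<subseteq> {..<n} \<and> card S = n} = {{..<n}}"
  proof -
    have "S \<subseteq> {..<n} \<and> card S = n \<longleftrightarrow> S = {..<n}" for S
      by (metis card_lessThan card_subset_eq finite_lessThan order_refl)
    then show ?thesis by auto
  qed
  then show ?thesis by (simp add: elem_sym_def)
qed

lemma cf_sym: assumes "k \<le> n" shows "cf (sym_map n l) k = elem_sym n k l"
proof -
  consider "k = 0" | "0 < k" "k < n" | "k = n" "0 < k" using assms by linarith
  then show ?thesis
  proof cases
    case 1 then show ?thesis by (simp add: cf_def elem_sym_0)
  next
    case 2 then show ?thesis by (simp add: cf_def sym_map_def)
  next
    case 3 then show ?thesis by (simp add: cf_def sym_map_def elem_sym_n)
  qed
qed

lemma vieta: "poly (pz n (sym_map n l)) t = (\<Prod>i<n. t - l i)"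
proof -
  have "(\<Prod>i<n. t - l i) = (\<Prod>i<n. (- l i) + t)" by simp
  also have "\<dots> = (\<Sum>X\<in>Pow {..<n}. (\<Prod>i\<in>X. - l i) * (\<Prod>i\<in>{..<n}-X. t))"
    by (rule prod_add) simp
  also have "\<dots> = (\<Sum>X\<in>Pow {..<n}. (-1)^card X * (\<Prod>i\<in>X. l i) * t^(n - card X))"
  proof (rule sum.cong)
    fix X assume X: "X \<in> Pow {..<n}"
    then have f: "finite X" by (auto intro: finite_subset)
    have "(\<Prod>i\<in>X. - l i) = (-1)^card X * (\<Prod>i\<in>X. l i)"
      by (simp add: prod_uminus)  
    moreover have "card ({..<n} - X) = n - card X" using X f by (simp add: card_Diff_subset)
    ultimately show "(\<Prod>i\<in>X. - l i) * (\<Prod>i\<in>{..<n}-X. t) = (-1)^card X * (\<Prod>i\<in>X. l i) * t^(n - card X)"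
      by simp
  qed simp
  also have "\<dots> = (\<Sum>k\<le>n. \<Sum>X\<in>{X. X \<in> Pow {..<n} \<and> card X = k}. (-1)^card X * (\<Prod>i\<in>X. l i) * t^(n - card X))"
    by (rule sum.group[symmetric]) (auto simp: card_mono[of "{..<n}", simplified])
  also have "\<dots> = (\<Sum>k\<le>n. (-1)^k * elem_sym n k l * t^(n-k))"
  proof (rule sum.cong)
    fix k assume "k \<in> {..n}"
    have "(\<Sum>X\<in>{X. X \<in> Pow {..<n} \<and> card X = k}. (-1)^card X * (\<Prod>i\<in>X. l i) * t^(n - card X))
       = (\<Sum>X\<in>{S. S \<subseteq> {..<n} \<and> card S = k}. (-1)^k * t^(n-k) * (\<Prod>i\<in>X. l i))"
      by (rule sum.cong) auto
    also have "\<dots> = (-1)^k * elem_sym n k l * t^(n-k)"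
      by (simp add: elem_sym_def sum_distrib_left sum_distrib_right mult_ac)
    finally show "(\<Sum>X\<in>{X. X \<in> Pow {..<n} \<and> card X = k}. (-1)^card X * (\<Prod>i\<in>X. l i) * t^(n - card X))
       = (-1)^k * elem_sym n k l * t^(n-k)" .
  qed simp
  also have "\<dots> = poly (pz n (sym_map n l)) t"
    by (simp add: poly_pz cf_sym)
  finally show ?thesis by simp
qed


lemma prod_mset_swap:
  "(\<Prod>x\<in>#R. \<Prod>i\<in>A. f x i) = (\<Prod>i\<in>A. \<Prod>x\<in>#R. (f x i :: complex))"
  by (induction R) (simp_all add: prod.distrib)

lemma sym_poly:
  fixes p :: "complex poly"
  shows "\<exists>G\<in>poly_fun n. \<forall>l. G (sym_map n l) = (\<Prod>i<n. poly p (l i))"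
proof -
  define c where "c = lead_coeff p"
  define R where "R = proots p"
  have pe: "poly p y = c * (\<Prod>x\<in>#R. (y - x))" for y
  proof -
    have "poly p y = poly (smult c (\<Prod>x\<in>#R. [:-x, 1:])) y"
      using complex_poly_decompose_multiset[of p] by (simp add: c_def R_def)
    also have "\<dots> = c * (\<Prod>x\<in>#R. (y - x))"
      by (simp add: poly_prod_mset multiset.map_comp o_def)
    finally show ?thesis .
  qed
  define G where "G z = c^n * (\<Prod>x\<in>#R. ((-1)^n * poly (pz n z) x))" for z
  have "G \<in> poly_fun n"
  proof -
    have "(\<lambda>z. (\<Prod>x\<in>#R. ((-1)^n * poly (pz n z) x))) \<in> poly_fun n"
      by (rule poly_fun_prod_mset) (rule poly_fun.mult[OF poly_fun.const poly_pz_fun])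
    then have "(\<lambda>z. c^n * (\<Prod>x\<in>#R. ((-1)^n * poly (pz n z) x))) \<in> poly_fun n"
      by (rule poly_fun.mult[OF poly_fun.const])
    then show ?thesis by (simp add: G_def[abs_def])
  qed
  moreover have "G (sym_map n l) = (\<Prod>i<n. poly p (l i))" for l
  proof -
    have "G (sym_map n l) = c^n * (\<Prod>x\<in>#R. ((-1)^n * (\<Prod>i<n. x - l i)))"
      by (simp add: G_def vieta)
    also have "\<dots> = c^n * (\<Prod>x\<in>#R. (\<Prod>i<n. l i - x))"
    proof -
      have "(-1)^n * (\<Prod>i<n. x - l i) = (\<Prod>i<n. l i - x)" for x
      proof -
        have "(\<Prod>i<n. l i - x) = (\<Prod>i<n. - (x - l i))" by simp
        also have "\<dots> = (-1)^n * (\<Prod>i<n. x - l i)"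
          using prod_uminus[of "\<lambda>i. x - l i" "{..<n}"] by (simp del: minus_diff_eq)
        finally show ?thesis by simp
      qed
      then show ?thesis by simp
    qed
    also have "\<dots> = c^n * (\<Prod>i<n. \<Prod>x\<in>#R. l i - x)" by (simp add: prod_mset_swap)
    also have "\<dots> = (\<Prod>i<n. c * (\<Prod>x\<in>#R. l i - x))" by (simp add: prod.distrib)
    also have "\<dots> = (\<Prod>i<n. poly p (l i))" by (simp add: pe)
    finally show ?thesis .
  qed
  ultimately show ?thesis by blast
qed


lemma prod_list_nth: "prod_list (map f xs) = (\<Prod>i<length xs. f (xs ! i) :: complex)"
proof -
  have "map f xs = map (\<lambda>i. f (xs ! i)) [0..<length xs]"
    by (rule nth_equalityI) auto
  then show ?thesis
    by (simp add: prod.distinct_set_conv_list[symmetric] atLeast0LessThan)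
qed

lemma pz_degree: "degree (pz n z) = n" and pz_lead: "lead_coeff (pz n z) = 1"
proof -
  have "degree (pz n z) \<le> n" by (rule degree_le) (simp add: coeff_pz)
  moreover have "n \<le> degree (pz n z)" by (rule le_degree) (simp add: coeff_pz cf_def)
  ultimately show d: "degree (pz n z) = n" by simp
  show "lead_coeff (pz n z) = 1" by (simp add: d coeff_pz cf_def)
qed

lemma sym_map_Cn: "sym_map n l \<in> Cn n"
  by (simp add: Cn_def sym_map_def)

lemma pz_inj:
  assumes "z \<in> Cn n" "w \<in> Cn n" "\<And>t. poly (pz n z) t = poly (pz n w) t"
  shows "z = w"
proof
  fix k
  have "pz n z = pz n w" using assms(3) poly_eq_poly_eq_iff by blast
  show "z k = w k"
  proof (cases "k < n")
    case True
    have "coeff (pz n z) (n - Suc k) = coeff (pz n w) (n - Suc k)" using \<open>pz n z = pz n w\<close> by simp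
    then show ?thesis using True by (simp add: coeff_pz cf_def)
  next
    case False then show ?thesis using assms(1,2) by (simp add: Cn_def)
  qed
qed

lemma sym_surj:
  assumes "z \<in> Cn n"
  shows "\<exists>l\<in>Cn n. sym_map n l = z"
proof -
  define p where "p = pz n z"
  define R where "R = proots p"
  obtain xs where xs: "mset xs = R" using ex_mset by blast
  have len: "length xs = n"
    using xs size_proots_complex[of p] by (metis R_def p_def pz_degree size_mset)
  define l where "l i = (if i < n then xs ! i else 0)" for i
  have lC: "l \<in> Cn n" by (simp add: Cn_def l_def)
  have "poly p t = poly (pz n (sym_map n l)) t" for t
  proof -
    have "poly p t = poly (smult (lead_coeff p) (\<Prod>x\<in>#R. [:-x, 1:])) t"
      using complex_poly_decompose_multiset[of p] by (simp add: R_def)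
    also have "\<dots> = (\<Prod>x\<in>#R. (t - x))"
      by (simp add: poly_prod_mset multiset.map_comp o_def p_def pz_lead)
    also have "\<dots> = prod_list (map (\<lambda>x. t - x) xs)"
      by (simp add: xs[symmetric] prod_mset_prod_list[symmetric])
    also have "\<dots> = (\<Prod>i<n. t - l i)" by (simp add: prod_list_nth len l_def)
    finally show ?thesis by (simp add: vieta)
  qed
  then have "z = sym_map n l" using pz_inj[OF assms sym_map_Cn] by (simp add: p_def)
  then show ?thesis using lC by blast
qed


lemma pz_root_iff: "poly (pz n (sym_map n m)) t = 0 \<longleftrightarrow> (\<exists>i<n. t = m i)"
  by (simp add: vieta) blast

lemma cont_F: "continuous_on UNIV (\<lambda>x::(nat \<Rightarrow> complex) \<times> complex. poly (pz n (fst x)) (snd x))"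
proof -
  have c: "continuous_on UNIV (\<lambda>x::(nat \<Rightarrow> complex) \<times> complex. cf (fst x) k)" for k
  proof (cases "k = 0")
    case True then show ?thesis by (simp add: cf_def)
  next
    case False
    have "continuous_on UNIV (\<lambda>x::(nat \<Rightarrow> complex) \<times> complex. fst x (k - 1))"
      by (rule continuous_on_compose2[OF continuous_on_product_coordinates continuous_on_fst]) auto
    then show ?thesis using False by (simp add: cf_def)
  qed
  show ?thesis unfolding poly_pz
    by (intro continuous_intros c)
qed

lemma uniform_r:
  assumes "compact K" "K \<subseteq> symG n"
  shows "\<exists>r<1. \<forall>m. sym_map n m \<in> K \<longrightarrow> (\<forall>i<n. cmod (m i) \<le> r)"
proof -
  define Z where "Z = (K \<times> cball (0::complex) 1) \<inter> {x. poly (pz n (fst x)) (snd x) = 0}"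
  have cZ: "compact Z" unfolding Z_def
    by (intro compact_Int_closed compact_Times assms compact_cball closed_Collect_eq cont_F) simp
  have roots_small: "cmod t < 1" if wK: "w \<in> K" and wt: "poly (pz n w) t = 0" for w t
  proof -
    obtain v where v: "v \<in> polydisc n" "w = sym_map n v" using wK assms(2) unfolding symG_def by blast
    then obtain i where "i < n" "t = v i" using wt pz_root_iff by blast
    then show ?thesis using v by (simp add: polydisc_def)
  qed
  show ?thesis
  proof (cases "Z = {}")
    case True
    have "\<forall>m. sym_map n m \<in> K \<longrightarrow> (\<forall>i<n. cmod (m i) \<le> 0)"
    proof (intro allI impI)
      fix m i assume "sym_map n m \<in> K" "i < n"
      then have "cmod (m i) < 1" using roots_small pz_root_iff by blast
      then have "(sym_map n m, m i) \<in> Z" using \<open>sym_map n m \<in> K\<close> \<open>i < n\<close> pz_root_iff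
        by (auto simp: Z_def)
      then show "cmod (m i) \<le> 0" using True by simp
    qed
    then show ?thesis by (intro exI[of _ 0]) auto
  next
    case False
    have "continuous_on Z (\<lambda>x. cmod (snd x))" by (intro continuous_intros)
    then obtain x0 where x0: "x0 \<in> Z" "\<forall>y\<in>Z. cmod (snd y) \<le> cmod (snd x0)"
      using continuous_attains_sup[OF cZ False] by blast
    have "cmod (snd x0) < 1" using x0(1) roots_small by (auto simp: Z_def)
    moreover have "\<forall>m. sym_map n m \<in> K \<longrightarrow> (\<forall>i<n. cmod (m i) \<le> cmod (snd x0))"
    proof (intro allI impI)
      fix m i assume "sym_map n m \<in> K" "i < n"
      then have "cmod (m i) < 1" using roots_small pz_root_iff by blast
      then have "(sym_map n m, m i) \<in> Z" using \<open>sym_map n m \<in> K\<close> \<open>i < n\<close> pz_root_iff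
        by (auto simp: Z_def)
      then show "cmod (m i) \<le> cmod (snd x0)" using x0 by force
    qed
    ultimately show ?thesis by blast
  qed
qed


lemma norm_one_plus_ge1: "cmod x - 1 \<le> cmod (1 + x)"
  using norm_triangle_ineq2[of x "-1"] by (simp add: add.commute)

lemma norm_one_plus_ge2: "1 - cmod x \<le> cmod (1 + x)"
  using norm_triangle_ineq2[of 1 "-x"] by simp

lemma norm_pow_div: "0 < \<rho> \<Longrightarrow> cmod (x ^ m / complex_of_real \<rho> ^ m) = (cmod x / \<rho>) ^ m"
  by (simp add: norm_divide norm_power power_divide)

lemma key:
  assumes n1: "n \<ge> 1"
    and r1: "r < 1"
    and Kr: "\<forall>m. sym_map n m \<in> K \<longrightarrow> (\<forall>i<n. cmod (m i) \<le> r)"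
    and Ksym: "K \<subseteq> range (sym_map n)"
    and hull: "sym_map n l \<in> poly_hull n K"
  shows "\<forall>i<n. cmod (l i) < 1"
proof (rule ccontr)
  assume "\<not> (\<forall>i<n. cmod (l i) < 1)"
  then obtain j where j: "j < n" "cmod (l j) \<ge> 1" by (auto simp: not_less)
  define A where "A = (\<lambda>i. cmod (l i)) ` {..<n}"
  have finA: "finite A" by (simp add: A_def)
  have neA: "A \<noteq> {}" using j by (auto simp: A_def)
  define R where "R = Max A"
  have "cmod (l j) \<in> A" using j by (simp add: A_def)
  then have R1: "R \<ge> 1" using j Max_ge[OF finA, of "cmod (l j)"] by (simp add: R_def)
  define S where "S = insert (max r 0) {a \<in> A. a < R}"
  have finS: "finite S" using finA by (simp add: S_def)
  define s where "s = Max S"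
  have "S \<noteq> {}" by (simp add: S_def)
  then have sS: "s \<in> S" unfolding s_def by (rule Max_in[OF finS])
  have sR: "s < R" using sS R1 r1 by (auto simp: S_def)
  have s0: "s \<ge> 0" and rs: "r \<le> s" using Max_ge[OF finS, of "max r 0"] by (auto simp: s_def S_def)
  have small: "cmod (l i) \<le> s" if "i < n" "cmod (l i) \<noteq> R" for i
  proof -
    have "cmod (l i) \<le> R" using that Max_ge[OF finA] by (auto simp: R_def A_def)
    then have "cmod (l i) \<in> S" using that by (auto simp: S_def A_def)
    then show ?thesis using Max_ge[OF finS] by (simp add: s_def)
  qed
  obtain i0 where i0: "i0 < n" "cmod (l i0) = R"
    using Max_in[OF finA neA] by (auto simp: R_def A_def)
  define \<rho> where "\<rho> = (s + R) / 2"
  have \<rho>: "s < \<rho>" "\<rho> < R" "0 < \<rho>" using sR s0 by (auto simp: \<rho>_def)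
  define a where "a = s / \<rho>"
  define b where "b = R / \<rho>"
  have a0: "0 \<le> a" "a < 1" using \<rho> s0 by (auto simp: a_def)
  have b1: "1 < b" using \<rho> by (auto simp: b_def)
  obtain m1 where m1: "a ^ m1 < 1/2" using real_arch_pow_inv[of "1/2" a] a0 by auto
  obtain m2 where m2: "8^n + 1 < b ^ m2" using real_arch_pow[OF b1] by blast
  define m where "m = m1 + m2"
  have am: "a ^ m \<le> 1/2" using m1 power_decreasing[of m1 m a] a0 by (simp add: m_def)
  have "b ^ m2 \<le> b ^ m" using b1 by (intro power_increasing) (auto simp: m_def)
  then have bm: "8^n + 1 \<le> b ^ m" using m2 by linarith
  define \<phi> where "\<phi> = [:1:] + monom (1 / complex_of_real \<rho> ^ m) m"
  have phi: "poly \<phi> x = 1 + x ^ m / complex_of_real \<rho> ^ m" for x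
    by (simp add: \<phi>_def poly_monom)
  obtain G where G: "G \<in> poly_fun n" "\<And>l. G (sym_map n l) = (\<Prod>i<n. poly \<phi> (l i))"
    using sym_poly[of n \<phi>] by blast
  have GK: "cmod (G w) \<le> 2^n" if wK: "w \<in> K" for w
  proof -
    obtain \<mu> where w: "w = sym_map n \<mu>" using wK Ksym by blast
    have "cmod (G w) = (\<Prod>i<n. cmod (poly \<phi> (\<mu> i)))" by (simp add: w G(2) prod_norm)
    also have "\<dots> \<le> (\<Prod>i<n. 2)"
    proof (rule prod_mono)
      fix i assume i: "i \<in> {..<n}"
      have "cmod (\<mu> i) \<le> r" using Kr wK w i by auto
      then have "cmod (\<mu> i) / \<rho> \<le> 1" using \<rho> rs by simp
      then have "(cmod (\<mu> i) / \<rho>) ^ m \<le> 1" using \<rho>(3) by (intro power_le_one) auto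
      then have "cmod (poly \<phi> (\<mu> i)) \<le> 2"
        using norm_triangle_ineq[of 1 "\<mu> i ^ m / complex_of_real \<rho> ^ m"] norm_pow_div[OF \<rho>(3)]
        by (simp add: phi)
      then show "0 \<le> cmod (poly \<phi> (\<mu> i)) \<and> cmod (poly \<phi> (\<mu> i)) \<le> 2" by simp
    qed
    finally show ?thesis by simp
  qed
  have "cmod (G (sym_map n l)) \<le> 2^n"
    using hull G(1) GK unfolding poly_hull_def by blast
  moreover have "cmod (G (sym_map n l)) > 2^n"
  proof -
    define f where "f i = cmod (poly \<phi> (l i))" for i
    have fe: "cmod (G (sym_map n l)) = (\<Prod>i<n. f i)" by (simp add: G(2) prod_norm f_def)
    have fhalf: "f i \<ge> 1/2" if "i < n" for i
    proof (cases "cmod (l i) = R")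
      case True
      have "b ^ m - 1 \<le> f i"
        using norm_one_plus_ge1[of "l i ^ m / complex_of_real \<rho> ^ m"] norm_pow_div[OF \<rho>(3)]
        by (simp add: f_def phi True b_def)
      moreover have "(1::real) \<le> 8^n" by simp
      ultimately show ?thesis using bm by linarith
    next
      case False
      have "cmod (l i) / \<rho> \<le> a" using small[OF that False] \<rho> by (simp add: a_def divide_right_mono)
      then have "(cmod (l i) / \<rho>) ^ m \<le> a ^ m" using \<rho>(3) by (intro power_mono) auto
      moreover have "1 - (cmod (l i) / \<rho>) ^ m \<le> f i"
        using norm_one_plus_ge2[of "l i ^ m / complex_of_real \<rho> ^ m"] norm_pow_div[OF \<rho>(3)]
        by (simp add: f_def phi)
      ultimately show ?thesis using am by linarith
    qed
    have fbig: "f i0 \<ge> 8^n"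
    proof -
      have "b ^ m - 1 \<le> f i0"
        using norm_one_plus_ge1[of "l i0 ^ m / complex_of_real \<rho> ^ m"] norm_pow_div[OF \<rho>(3)]
        by (simp add: f_def phi i0 b_def)
      then show ?thesis using bm by linarith
    qed
    have "(\<Prod>i<n. f i) = f i0 * (\<Prod>i\<in>{..<n} - {i0}. f i)"
      using i0 by (simp add: prod.remove)
    moreover have "(\<Prod>i\<in>{..<n} - {i0}. f i) \<ge> (\<Prod>i\<in>{..<n} - {i0}. 1/2)"
      by (rule prod_mono) (use fhalf in auto)
    moreover have "(\<Prod>i\<in>{..<n} - {i0}. (1/2::real)) = (1/2)^(n-1)"
      using i0 by simp
    moreover have "(1/2::real)^(n-1) \<ge> (1/2)^n"
      by (rule power_decreasing) auto
    moreover have "(8::real)^n * (1/2)^n = 4^n"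
      by (simp add: power_mult_distrib[symmetric])
    moreover have "(2::real)^n < 4^n" using n1 by (intro power_strict_mono) auto
    ultimately have "(\<Prod>i<n. f i) > 2^n"
    proof -
      assume e: "(\<Prod>i<n. f i) = f i0 * (\<Prod>i\<in>{..<n} - {i0}. f i)"
        and p1: "(\<Prod>i\<in>{..<n} - {i0}. f i) \<ge> (\<Prod>i\<in>{..<n} - {i0}. 1/2)"
        and p2: "(\<Prod>i\<in>{..<n} - {i0}. (1/2::real)) = (1/2)^(n-1)"
        and p3: "(1/2::real)^(n-1) \<ge> (1/2)^n"
        and p4: "(8::real)^n * (1/2)^n = 4^n"
        and p5: "(2::real)^n < 4^n"
      have "f i0 * (\<Prod>i\<in>{..<n} - {i0}. f i) \<ge> 8^n * (1/2)^n"
      proof (rule mult_mono)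
        show "(1/2)^n \<le> (\<Prod>i\<in>{..<n} - {i0}. f i)" using p1 p2 p3 by linarith
        have "(0::real) \<le> 8^n" by simp
        then show "0 \<le> f i0" using fbig by linarith
      qed (use fbig in auto)
      then show ?thesis using e p4 p5 by linarith
    qed
    then show ?thesis using fe by simp
  qed
  ultimately show False by simp
qed


theorem mainTheorem5:
  fixes n :: nat and \<Lambda> :: "(nat \<Rightarrow> complex) set"
  assumes "n \<ge> 2"
    and "distinguished_variety n \<Lambda>"
  shows "poly_convex n \<Lambda>"
proof -
  obtain P where P: "P \<subseteq> poly_fun n" "\<Lambda> = zero_set n P \<inter> symG n"
    using assms(2) unfolding distinguished_variety_def by blast
  have "\<Lambda> \<subseteq> Cn n" using P(2) by (auto simp: zero_set_def)
  moreover have "poly_hull n K \<subseteq> \<Lambda>" if K: "compact K" "K \<subseteq> \<Lambda>" for K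
  proof
    fix z assume z: "z \<in> poly_hull n K"
    then have zC: "z \<in> Cn n" by (simp add: poly_hull_def)
    have zP: "p z = 0" if p: "p \<in> P" for p
    proof -
      have "\<forall>w\<in>K. cmod (p w) \<le> 0" using K(2) P(2) p by (auto simp: zero_set_def)
      then have "cmod (p z) \<le> 0" using z p P(1) unfolding poly_hull_def by blast
      then show ?thesis by simp
    qed
    obtain l where l: "l \<in> Cn n" "sym_map n l = z" using sym_surj[OF zC] by blast
    have KG: "K \<subseteq> symG n" using K(2) P(2) by blast
    obtain r where r: "r < 1" "\<forall>m. sym_map n m \<in> K \<longrightarrow> (\<forall>i<n. cmod (m i) \<le> r)"
      using uniform_r[OF K(1) KG] by blast
    have Ksym: "K \<subseteq> range (sym_map n)" using KG by (auto simp: symG_def)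
    have "\<forall>i<n. cmod (l i) < 1"
      by (rule key[OF _ r(1) r(2) Ksym]) (use assms(1) z l in auto)
    then have "l \<in> polydisc n" using l(1) by (simp add: polydisc_def)
    then have "z \<in> symG n" using l(2) by (auto simp: symG_def)
    then show "z \<in> \<Lambda>" using P(2) zC zP by (simp add: zero_set_def)
  qed
  ultimately show ?thesis by (simp add: poly_convex_def)
qed

end
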